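(* Let $(x_j,y_j)\in[0,1]^2$, $1\le j\le 10$, be ten points such that the ten singleton sets $S_j=\{(x_j,y_j)\}$ are $\nu$-transverse for some $\nu>0$. Let $V_j\subset\mathbb{R}^5$ be the plane spanned by $n_j=(1,0,2x_j,0,y_j)$ and $m_j=(0,1,0,2y_j,x_j)$, and let $\pi_j$ be the orthogonal projection onto $V_j$. Then for every linear subspace $V\subset\mathbb{R}^5$, $$\dim V\le \frac14\sum_{j=1}^{10}\dim(\pi_j(V)).$$
   Context: For $u=(u_1,\dots,u_5),v=(v_1,\dots,v_5)\in\mathbb{R}^5$ define $Q_{u,v}(x,y)=2x^2(v_3u_5-v_5u_3)+2y^2(v_5u_4-v_4u_5)+4xy(v_3u_4-v_4u_3)+2x(v_3u_2-v_2u_3)+2y(v_5u_2-v_2u_5)+v_1u_2-v_2u_1$. Ten sets $S_1,\dots,S_{10}\subset[0,1]^2$ are $\nu$-transverse if: (i) for all pairwise distinct $i,j,k\in\{1,\dots,10\}$ and all $(x_i,y_i)\in S_i,(x_j,y_j)\in S_j,(x_k,y_k)\in S_k$ there is a permutation $\pi$ of $\{i,j,k\}$ with $|(y_{\pi(j)}-y_{\pi(i)})[(x_{\pi(j)}-x_{\pi(i)})(y_{\pi(k)}-y_{\pi(i)})-(x_{\pi(k)}-x_{\pi(i)})(y_{\pi(j)}-y_{\pi(i)})]|\ge\nu$; and (ii) for all pairwise distinct $i_1,\dots,i_5\in\{1,\dots,10\}$ and all $(x_j,y_j)\in S_{i_j}$ ($1\le j\le 5$), $\inf_{u,v,w}\max_{1\le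 j\le5}(|Q_{u,v}(x_j,y_j)|+|Q_{u,w}(x_j,y_j)|)\ge\nu$, the infimum over all orthonormal triples $(u,v,w)$ in $\mathbb{R}^5$. *)

theory Defs
  imports "HOL-Analysis.Analysis"
begin

definition Qpoly :: "real^5 \<Rightarrow> real^5 \<Rightarrow> real \<Rightarrow> real \<Rightarrow> real" where
  "Qpoly u v x y =
     2 * x^2 * (v$3 * u$5 - v$5 * u$3) + 2 * y^2 * (v$5 * u$4 - v$4 * u$5)
     + 4 * x * y * (v$3 * u$4 - v$4 * u$3) + 2 * x * (v$3 * u$2 - v$2 * u$3)
     + 2 * y * (v$5 * u$2 - v$2 * u$5) + v$1 * u$2 - v$2 * u$1"

definition orthonormal_triple :: "real^5 \<Rightarrow> real^5 \<Rightarrow> real^5 \<Rightarrow> bool" where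
  "orthonormal_triple u v w \<longleftrightarrow>
     norm u = 1 \<and> norm v = 1 \<and> norm w = 1 \<and> u \<bullet> v = 0 \<and> u \<bullet> w = 0 \<and> v \<bullet> w = 0"

definition nu_transverse :: "real \<Rightarrow> (nat \<Rightarrow> (real \<times> real) set) \<Rightarrow> bool" where
  "nu_transverse \<nu> S \<longleftrightarrow>
     (\<forall>i\<in>{1..10}. S i \<subseteq> {0..1} \<times> {0..1}) \<and>
     (\<forall>i\<in>{1..10}. \<forall>j\<in>{1..10}. \<forall>k\<in>{1..10}. i \<noteq> j \<and> i \<noteq> k \<and> j \<noteq> k \<longrightarrow>
        (\<forall>p :: nat \<Rightarrow> real \<times> real. p i \<in> S i \<and> p j \<in> S j \<and> p k \<in> S k \<longrightarrow>
          (\<exists>\<pi>. \<pi> permutes {i, j, k} \<and>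
             (let xs = (\<lambda>l. fst (p (\<pi> l))); ys = (\<lambda>l. snd (p (\<pi> l))) in
               \<bar>(ys j - ys i) * ((xs j - xs i) * (ys k - ys i) - (xs k - xs i) * (ys j - ys i))\<bar> \<ge> \<nu>)))) \<and>
     (\<forall>ii :: nat \<Rightarrow> nat. (\<forall>j\<in>{1..5}. ii j \<in> {1..10}) \<and> inj_on ii {1..5} \<longrightarrow>
        (\<forall>p :: nat \<Rightarrow> real \<times> real. (\<forall>j\<in>{1..5}. p j \<in> S (ii j)) \<longrightarrow>
          (INF t \<in> {(u, v, w). orthonormal_triple u v w}.
             (case t of (u, v, w) \<Rightarrow>
               Max ((\<lambda>j. \<bar>Qpoly u v (fst (p j)) (snd (p j))\<bar> + \<bar>Qpoly u w (fst (p j)) (snd (p j))\<bar>) ` {1..5})))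
          \<ge> \<nu>))"

definition orth_proj :: "'a::euclidean_space set \<Rightarrow> 'a \<Rightarrow> 'a" where
  "orth_proj W z = (THE q. q \<in> W \<and> (\<forall>w\<in>W. (z - q) \<bullet> w = 0))"

definition nvec :: "real \<Rightarrow> real \<Rightarrow> real^5" where
  "nvec x y = vector [1, 0, 2 * x, 0, y]"

definition mvec :: "real \<Rightarrow> real \<Rightarrow> real^5" where
  "mvec x y = vector [0, 1, 0, 2 * y, x]"

definition Vplane :: "real \<Rightarrow> real \<Rightarrow> (real^5) set" where
  "Vplane x y = span {nvec x y, mvec x y}"

end

theory Submission
  imports Defs
begin


lemma exhaust_5':
  fixes i :: 5
  shows "i = 1 \<or> i = 2 \<or> i = 3 \<or> i = 4 \<or> i = 5"
proof (induct i)
  case (of_int z)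
  then have "z = 0 \<or> z = 1 \<or> z = 2 \<or> z = 3 \<or> z = 4" by fastforce
  then show ?case by auto
qed

lemma UNIV5: "(UNIV::5 set) = {1,2,3,4,5}"
  using exhaust_5' by auto

lemma inner5: "(a::real^5) \<bullet> b = a$1*b$1 + a$2*b$2 + a$3*b$3 + a$4*b$4 + a$5*b$5"
  unfolding inner_vec_def UNIV5 by simp

lemma vec5_eq: "(a::real^5) = b \<longleftrightarrow> a$1=b$1 \<and> a$2=b$2 \<and> a$3=b$3 \<and> a$4=b$4 \<and> a$5=b$5"
proof
  assume "a$1=b$1 \<and> a$2=b$2 \<and> a$3=b$3 \<and> a$4=b$4 \<and> a$5=b$5"
  then show "a = b" unfolding vec_eq_iff using exhaust_5' by metis
qed simp

lemma nvec_c: "nvec x y $ 1 = 1" "nvec x y $ 2 = 0" "nvec x y $ 3 = 2*x" "nvec x y $ 4 = 0" "nvec x y $ 5 = y"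
  by (simp_all add: nvec_def vector_def)
lemma mvec_c: "mvec x y $ 1 = 0" "mvec x y $ 2 = 1" "mvec x y $ 3 = 0" "mvec x y $ 4 = 2*y" "mvec x y $ 5 = x"
  by (simp_all add: mvec_def vector_def)

lemma inner_n: "nvec x y \<bullet> u = u$1 + 2*x*u$3 + y*u$5"
  by (simp add: inner5 nvec_c)
lemma inner_m: "mvec x y \<bullet> u = u$2 + 2*y*u$4 + x*u$5"
  by (simp add: inner5 mvec_c)

lemma proj_props:
  fixes W :: "'a::euclidean_space set"
  assumes "subspace W"
  shows "orth_proj W z \<in> W \<and> (\<forall>w\<in>W. (z - orth_proj W z) \<bullet> w = 0)"
proof -
  have sW: "span W = W" using assms by (simp add: span_eq_iff)
  obtain q r where q: "q \<in> span W" "\<And>w. w \<in> span W \<Longrightarrow> orthogonal r w" "z = q + r"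
    using orthogonal_subspace_decomp_exists by metis
  have e: "q \<in> W \<and> (\<forall>w\<in>W. (z - q) \<bullet> w = 0)"
    using q sW by (simp add: orthogonal_def)
  have ex: "\<exists>!q. q \<in> W \<and> (\<forall>w\<in>W. (z - q) \<bullet> w = 0)"
  proof (rule ex1I[of _ q])
    show "q \<in> W \<and> (\<forall>w\<in>W. (z - q) \<bullet> w = 0)" by (rule e)
  next
    fix q' assume q': "q' \<in> W \<and> (\<forall>w\<in>W. (z - q') \<bullet> w = 0)"
    have d: "q - q' \<in> W" using e q' assms subspace_diff by blast
    have "(z - q') \<bullet> (q - q') - (z - q) \<bullet> (q - q') = 0" using e q' d by simp
    hence "(q - q') \<bullet> (q - q') = 0" by (simp add: algebra_simps)
    thus "q' = q" by simp
  qed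
  show ?thesis unfolding orth_proj_def using theI'[OF ex] by blast
qed

lemma perp_alg:
  fixes u1 u2 u3 u4 u5 xa ya xb yb xc yc :: real
  assumes "u1 + 2*xa*u3 + ya*u5 = 0" "u2 + 2*ya*u4 + xa*u5 = 0"
    "u1 + 2*xb*u3 + yb*u5 = 0" "u2 + 2*yb*u4 + xb*u5 = 0"
    "u1 + 2*xc*u3 + yc*u5 = 0" "u2 + 2*yc*u4 + xc*u5 = 0"
    and nz: "\<not> (u1 = 0 \<and> u2 = 0 \<and> u3 = 0 \<and> u4 = 0 \<and> u5 = 0)"
  shows "(xb - xa)*(yc - ya) - (xc - xa)*(yb - ya) = 0"
proof -
  let ?c = "(xb - xa)*(yc - ya) - (xc - xa)*(yb - ya)"
  have 3: "?c * u3 = 0" using assms(1-6) by algebra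
  have 4: "?c * u4 = 0" using assms(1-6) by algebra
  have 5: "?c * u5 = 0" using assms(1-6) by algebra
  show ?thesis
  proof (rule ccontr)
    assume "?c \<noteq> 0"
    hence "u3 = 0" "u4 = 0" "u5 = 0" using 3 4 5 by auto
    with assms(1,2) nz show False by simp
  qed
qed

lemma inter_alg:
  fixes a b c d xi yi xj yj :: real
  assumes "a = c" "b = d" "2*a*xi = 2*c*xj" "2*b*yi = 2*d*yj" "a*yi + b*xi = c*yj + d*xj"
    and "\<not> (a = 0 \<and> b = 0)"
  shows "xi = xj \<and> yi = yj"
proof (cases "a = 0")
  case True
  then have "b \<noteq> 0" using assms by auto
  then show ?thesis using assms True by auto
next
  case False
  then have "xi = xj" using assms by auto
  then show ?thesis using assms False by auto
qed

lemma dimW: "dim (Vplane a b) = 2"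
proof -
  have M0: "mvec a b \<noteq> 0" using mvec_c(2)[of a b] by auto
  have "nvec a b \<notin> span {mvec a b}"
  proof
    assume "nvec a b \<in> span {mvec a b}"
    then obtain c where "nvec a b = c *\<^sub>R mvec a b" by (auto simp: span_singleton)
    hence "nvec a b $ 1 = c * mvec a b $ 1" by simp
    thus False by (simp add: nvec_c mvec_c)
  qed
  moreover have "dim {mvec a b} = 1" using M0 by (simp add: dim_insert)
  ultimately show ?thesis unfolding Vplane_def dim_span by (simp add: dim_insert)
qed

lemma subspaceW: "subspace (Vplane a b)"
  unfolding Vplane_def by simp

lemma L1:
  assumes "dim (orth_proj (Vplane a b) ` V) < 2"
  shows "\<exists>z. z \<noteq> 0 \<and> z \<in> Vplane a b \<and> (\<forall>v\<in>V. z \<bullet> v = 0)"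
proof -
  let ?W = "Vplane a b" and ?P = "orth_proj (Vplane a b)"
  have pp: "\<And>v. ?P v \<in> ?W \<and> (\<forall>w\<in>?W. (v - ?P v) \<bullet> w = 0)"
    using proj_props[OF subspaceW] by blast
  have "?P ` V \<subseteq> ?W" using pp by blast
  hence sub: "span (?P ` V) \<subseteq> span ?W" by (rule span_mono)
  have "span (?P ` V) \<noteq> span ?W"
  proof
    assume "span (?P ` V) = span ?W"
    hence "dim (?P ` V) = dim ?W" by (metis dim_span)
    thus False using assms dimW by simp
  qed
  hence "span (?P ` V) \<subset> span ?W" using sub by blast
  then obtain z where z: "z \<noteq> 0" "z \<in> span ?W" "\<And>w. w \<in> span (?P ` V) \<Longrightarrow> orthogonal z w"
    using orthogonal_to_subspace_exists_gen by metis
  have zW: "z \<in> ?W" using z(2) subspaceW by (metis span_eq_iff)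
  have "\<forall>v\<in>V. z \<bullet> v = 0"
  proof
    fix v assume "v \<in> V"
    hence "z \<bullet> ?P v = 0" using z(3) by (simp add: orthogonal_def span_base)
    moreover have "(v - ?P v) \<bullet> z = 0" using pp zW by blast
    ultimately show "z \<bullet> v = 0" by (simp add: algebra_simps inner_commute)
  qed
  thus ?thesis using z zW by blast
qed

lemma L0:
  assumes "dim (orth_proj (Vplane a b) ` V) = 0" "v \<in> V"
  shows "nvec a b \<bullet> v = 0 \<and> mvec a b \<bullet> v = 0"
proof -
  let ?W = "Vplane a b" and ?P = "orth_proj (Vplane a b)"
  have pp: "\<And>v. ?P v \<in> ?W \<and> (\<forall>w\<in>?W. (v - ?P v) \<bullet> w = 0)"
    using proj_props[OF subspaceW] by blast
  have "?P v = 0" using assms by auto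
  moreover have "nvec a b \<in> ?W" "mvec a b \<in> ?W" unfolding Vplane_def by (auto intro: span_base)
  ultimately have "(v - 0) \<bullet> nvec a b = 0" "(v - 0) \<bullet> mvec a b = 0" using pp[of v] by metis+
  thus ?thesis by (simp add: inner_commute)
qed

lemma span2: "z \<in> span {a, b} \<longleftrightarrow> (\<exists>c d. z = c *\<^sub>R a + d *\<^sub>R b)"
  apply (auto simp: span_insert span_singleton)
  subgoal for k ka by (rule exI[of _ k], rule exI[of _ ka]) (metis add.commute diff_eq_eq)
  subgoal for c d by (rule exI[of _ c], rule exI[of _ d]) simp
  done

context
  fixes x y :: "nat \<Rightarrow> real" and \<nu> :: real
  assumes T: "nu_transverse \<nu> (\<lambda>j. {(x j, y j)})" and nu: "\<nu> > 0"
begin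

lemma L_col:
  assumes ijk: "i \<in> {1..10}" "j \<in> {1..10}" "k \<in> {1..10}" "i \<noteq> j" "i \<noteq> k" "j \<noteq> k"
    and cr: "\<And>a b c. a \<in> {i,j,k} \<Longrightarrow> b \<in> {i,j,k} \<Longrightarrow> c \<in> {i,j,k} \<Longrightarrow>
        (x b - x a) * (y c - y a) - (x c - x a) * (y b - y a) = 0"
  shows False
proof -
  have T2: "\<forall>i\<in>{1..10}. \<forall>j\<in>{1..10}. \<forall>k\<in>{1..10}. i \<noteq> j \<and> i \<noteq> k \<and> j \<noteq> k \<longrightarrow>
        (\<forall>p :: nat \<Rightarrow> real \<times> real. p i \<in> {(x i, y i)} \<and> p j \<in> {(x j, y j)} \<and> p k \<in> {(x k, y k)} \<longrightarrow>
          (\<exists>\<pi>. \<pi> permutes {i, j, k} \<and>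
             (let xs = (\<lambda>l. fst (p (\<pi> l))); ys = (\<lambda>l. snd (p (\<pi> l))) in
               \<bar>(ys j - ys i) * ((xs j - xs i) * (ys k - ys i) - (xs k - xs i) * (ys j - ys i))\<bar> \<ge> \<nu>)))"
    using T unfolding nu_transverse_def by (rule conjunct1[OF conjunct2])
  have "\<exists>\<pi>. \<pi> permutes {i, j, k} \<and>
             (let xs = (\<lambda>l. fst ((\<lambda>l. (x l, y l)) (\<pi> l))); ys = (\<lambda>l. snd ((\<lambda>l. (x l, y l)) (\<pi> l))) in
               \<bar>(ys j - ys i) * ((xs j - xs i) * (ys k - ys i) - (xs k - xs i) * (ys j - ys i))\<bar> \<ge> \<nu>)"
    by (rule T2[rule_format, OF ijk(1,2,3), of "\<lambda>l. (x l, y l)"]) (use ijk in auto)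
  then obtain \<pi> where pi: "\<pi> permutes {i, j, k}" and
    ge: "\<bar>(y (\<pi> j) - y (\<pi> i)) * ((x (\<pi> j) - x (\<pi> i)) * (y (\<pi> k) - y (\<pi> i)) - (x (\<pi> k) - x (\<pi> i)) * (y (\<pi> j) - y (\<pi> i)))\<bar> \<ge> \<nu>"
    by (auto simp: Let_def)
  have "\<pi> i \<in> {i,j,k}" "\<pi> j \<in> {i,j,k}" "\<pi> k \<in> {i,j,k}"
    using permutes_in_image[OF pi] by auto
  hence "(x (\<pi> j) - x (\<pi> i)) * (y (\<pi> k) - y (\<pi> i)) - (x (\<pi> k) - x (\<pi> i)) * (y (\<pi> j) - y (\<pi> i)) = 0"
    using cr by blast
  with ge nu show False by simp
qed

lemma L_line:
  assumes ijk: "i \<in> {1..10}" "j \<in> {1..10}" "k \<in> {1..10}" "i \<noteq> j" "i \<noteq> k" "j \<noteq> k"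
    and ln: "\<And>a. a \<in> {i,j,k} \<Longrightarrow> \<exists>l. x a = q1 + l * d1 \<and> y a = q2 + l * d2"
  shows False
proof (rule L_col[OF ijk])
  fix a b c assume "a \<in> {i,j,k}" "b \<in> {i,j,k}" "c \<in> {i,j,k}"
  then obtain la lb lc where "x a = q1 + la * d1" "y a = q2 + la * d2" "x b = q1 + lb * d1" "y b = q2 + lb * d2"
     "x c = q1 + lc * d1" "y c = q2 + lc * d2" using ln by metis
  thus "(x b - x a) * (y c - y a) - (x c - x a) * (y b - y a) = 0" by (simp add: algebra_simps)
qed

lemma L_eq:
  assumes ijk: "i \<in> {1..10}" "j \<in> {1..10}" "k \<in> {1..10}" "i \<noteq> j" "i \<noteq> k" "j \<noteq> k"
    and e: "x i = x j" "y i = y j"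
  shows False
proof (rule L_line[OF ijk, of "x i" "x k - x i" "y i" "y k - y i"])
  fix a assume "a \<in> {i,j,k}"
  then show "\<exists>l. x a = x i + l * (x k - x i) \<and> y a = y i + l * (y k - y i)"
    using e by (auto intro: exI[of _ 0] exI[of _ 1])
qed

lemma L_perp:
  assumes ijk: "i \<in> {1..10}" "j \<in> {1..10}" "k \<in> {1..10}" "i \<noteq> j" "i \<noteq> k" "j \<noteq> k"
    and u: "u \<noteq> 0"
    and pe: "\<And>a. a \<in> {i,j,k} \<Longrightarrow> nvec (x a) (y a) \<bullet> u = 0 \<and> mvec (x a) (y a) \<bullet> u = 0"
  shows False
proof (rule L_col[OF ijk])
  fix a b c assume abc: "a \<in> {i,j,k}" "b \<in> {i,j,k}" "c \<in> {i,j,k}"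
  have nz: "\<not> (u$1 = 0 \<and> u$2 = 0 \<and> u$3 = 0 \<and> u$4 = 0 \<and> u$5 = 0)"
    using u by (auto simp: vec5_eq)
  show "(x b - x a) * (y c - y a) - (x c - x a) * (y b - y a) = 0"
    apply (rule perp_alg[OF _ _ _ _ _ _ nz])
    using pe[OF abc(1)] pe[OF abc(2)] pe[OF abc(3)] by (simp_all add: inner_n inner_m)
qed

lemma L_inter:
  assumes ij: "i \<in> {1..10}" "j \<in> {1..10}" "i \<noteq> j"
    and z: "z \<noteq> 0" "z \<in> Vplane (x i) (y i)" "z \<in> Vplane (x j) (y j)"
  shows False
proof -
  obtain k where k: "k \<in> {1..10}" "k \<noteq> i" "k \<noteq> j"
  proof -
    have "\<exists>k\<in>{1::nat,2,3}. k \<noteq> i \<and> k \<noteq> j" by (cases "i=1"; cases "j=1"; cases "i=2"; cases "j=2"; auto)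
    then obtain k where kk: "k\<in>{1::nat,2,3}" "k \<noteq> i" "k \<noteq> j" by blast
    show ?thesis by (rule that[of k]) (use kk in auto)
  qed
  obtain a b where ab: "z = a *\<^sub>R nvec (x i) (y i) + b *\<^sub>R mvec (x i) (y i)"
    using z(2) unfolding Vplane_def span2 by blast
  obtain c d where cd: "z = c *\<^sub>R nvec (x j) (y j) + d *\<^sub>R mvec (x j) (y j)"
    using z(3) unfolding Vplane_def span2 by blast
  have nz: "\<not> (a = 0 \<and> b = 0)" using z(1) ab by auto
  have z1: "z$1 = a" "z$2 = b" "z$3 = 2*a*x i" "z$4 = 2*b*y i" "z$5 = a*y i + b*x i"
    using ab by (simp_all add: nvec_c mvec_c)
  have z2: "z$1 = c" "z$2 = d" "z$3 = 2*c*x j" "z$4 = 2*d*y j" "z$5 = c*y j + d*x j"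
    using cd by (simp_all add: nvec_c mvec_c)
  have e: "a = c" "b = d" "2*a*x i = 2*c*x j" "2*b*y i = 2*d*y j" "a*y i + b*x i = c*y j + d*x j"
    using z1 z2 by metis+
  have "x i = x j \<and> y i = y j"
    by (rule inter_alg[OF e nz])
  thus False using L_eq[of i j k] ij k by auto
qed

end




lemma pickn:
  assumes "finite S" "n \<le> card S"
  shows "\<exists>f. inj_on f {1..n} \<and> f ` {1..n} \<subseteq> S"
proof -
  obtain T where T: "T \<subseteq> S" "card T = n" "finite T" using obtain_subset_with_card_n[OF assms(2)] by metis
  obtain h where "bij_betw h {1..card T} T" using ex_bij_betw_nat_finite_1[OF T(3)] by blast
  thus ?thesis using T by (auto simp: bij_betw_def)
qed

lemma cubic4:
  fixes t1 t2 t3 t4 c0 c1 c2 c3 :: real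
  assumes d: "t1 \<noteq> t2" "t1 \<noteq> t3" "t1 \<noteq> t4" "t2 \<noteq> t3" "t2 \<noteq> t4" "t3 \<noteq> t4"
    and g: "c0 + c1*t1 + c2*t1^2 + c3*t1^3 = 0" "c0 + c1*t2 + c2*t2^2 + c3*t2^3 = 0"
      "c0 + c1*t3 + c2*t3^2 + c3*t3^3 = 0" "c0 + c1*t4 + c2*t4^2 + c3*t4^3 = 0"
  shows "c0 = 0 \<and> c1 = 0 \<and> c2 = 0 \<and> c3 = 0"
proof -
  define h where "h s t = c1 + c2*(s+t) + c3*(s^2+s* t+t^2)" for s t
  have hs: "(s - t) * h s t = (c0 + c1* s + c2* s^2 + c3* s^3) - (c0 + c1* t + c2* t^2 + c3* t^3)" for s t
    unfolding h_def by (simp add: algebra_simps power2_eq_square power3_eq_cube)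
  have h12: "h t1 t2 = 0" using hs[of t1 t2] g d by simp
  have h13: "h t1 t3 = 0" using hs[of t1 t3] g d by simp
  have h14: "h t1 t4 = 0" using hs[of t1 t4] g d by simp
  define k where "k s t u = c2 + c3*(s+t+u)" for s t u
  have ks: "(t - u) * k s t u = h s t - h s u" for s t u
    unfolding h_def k_def by (simp add: algebra_simps power2_eq_square)
  have k3: "k t1 t2 t3 = 0" using ks[of t2 t3 t1] h12 h13 d by simp
  have k4: "k t1 t2 t4 = 0" using ks[of t2 t4 t1] h12 h14 d by simp
  have "(t3 - t4) * c3 = k t1 t2 t3 - k t1 t2 t4" unfolding k_def by (simp add: algebra_simps)
  hence c3: "c3 = 0" using k3 k4 d by simp
  hence c2: "c2 = 0" using k3 unfolding k_def by simp
  hence c1: "c1 = 0" using h12 c3 unfolding h_def by simp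
  hence "c0 = 0" using g(1) c2 c3 by simp
  thus ?thesis using c1 c2 c3 by simp
qed

lemma cubic_hom:
  fixes A B :: "nat \<Rightarrow> real" and c0 c1 c2 c3 :: real
  assumes K: "finite K" "card K \<ge> 5"
    and nz: "\<And>i. i \<in> K \<Longrightarrow> \<not> (A i = 0 \<and> B i = 0)"
    and np: "\<And>i j. i \<in> K \<Longrightarrow> j \<in> K \<Longrightarrow> i \<noteq> j \<Longrightarrow> A i * B j \<noteq> A j * B i"
    and f: "\<And>i. i \<in> K \<Longrightarrow> c0 * A i^3 + c1 * A i^2 * B i + c2 * A i * B i^2 + c3 * B i^3 = 0"
  shows "c0 = 0 \<and> c1 = 0 \<and> c2 = 0 \<and> c3 = 0"
proof -
  let ?K' = "{i\<in>K. A i \<noteq> 0}"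
  have "card (K - ?K') \<le> Suc 0"
    unfolding card_le_Suc0_iff_eq[OF finite_Diff[OF K(1)]]
  proof (intro ballI)
    fix i j assume "i \<in> K - ?K'" "j \<in> K - ?K'"
    thus "i = j" using np[of i j] by auto
  qed
  moreover have "card (K - ?K') = card K - card ?K'" by (rule card_Diff_subset) (use K(1) in auto)
  ultimately have "card ?K' \<ge> 4" using K by arith
  then obtain h where h: "inj_on h {1..4::nat}" "h ` {1..4::nat} \<subseteq> ?K'"
    using pickn[of ?K' 4] K(1) by auto
  define t where "t i = B (h i) / A (h i)" for i
  have hin: "h i \<in> K" "A (h i) \<noteq> 0" if "i \<in> {1..4::nat}" for i
  proof -
    have "h i \<in> ?K'" using h(2) that by blast
    thus "h i \<in> K" "A (h i) \<noteq> 0" by auto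
  qed
  have tdist: "t i \<noteq> t j" if "i \<in> {1..4::nat}" "j \<in> {1..4::nat}" "i \<noteq> j" for i j
  proof
    assume "t i = t j"
    hence "A (h i) * B (h j) = A (h j) * B (h i)" using hin[OF that(1)] hin[OF that(2)]
      unfolding t_def by (simp add: field_simps)
    moreover have "h i \<noteq> h j" using h(1) that by (meson inj_onD)
    ultimately show False using np hin that by blast
  qed
  have troot: "c0 + c1 * t i + c2 * t i^2 + c3 * t i^3 = 0" if "i \<in> {1..4::nat}" for i
  proof -
    have a: "A (h i) \<noteq> 0" using hin[OF that] by simp
    have "c0 * A (h i)^3 + c1 * A (h i)^2 * B (h i) + c2 * A (h i) * B (h i)^2 + c3 * B (h i)^3 = 0"
      using f hin[OF that] by blast
    hence "(c0 * A (h i)^3 + c1 * A (h i)^2 * B (h i) + c2 * A (h i) * B (h i)^2 + c3 * B (h i)^3) / A (h i)^3 = 0"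
      by simp
    thus ?thesis using a unfolding t_def by (simp add: field_simps power2_eq_square power3_eq_cube)
  qed
  show ?thesis
    by (rule cubic4[of "t 1" "t 2" "t 3" "t 4"])
       (simp_all add: tdist troot)
qed

lemma line_alg:
  fixes a b c3 c4 c5 dx dy l :: real
  assumes nz: "\<not>(a=0 \<and> b=0)" and e: "2*a*dx = l*c3" "2*b*dy = l*c4" "a*dy + b*dx = l*c5"
  shows "dx = l * (if a \<noteq> 0 then c3/(2*a) else c5/b) \<and> dy = l * (if b \<noteq> 0 then c4/(2*b) else c5/a)"
proof -
  have 1: "dx = l * (if a \<noteq> 0 then c3/(2*a) else c5/b)"
  proof (cases "a = 0")
    case True
    hence "b \<noteq> 0" using nz by auto
    thus ?thesis using True e(3) by (simp add: field_simps)
  next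
    case False
    thus ?thesis using e(1) by (simp add: field_simps)
  qed
  have 2: "dy = l * (if b \<noteq> 0 then c4/(2*b) else c5/a)"
  proof (cases "b = 0")
    case True
    hence "a \<noteq> 0" using nz by auto
    thus ?thesis using True e(3) by (simp add: field_simps)
  next
    case False
    thus ?thesis using e(2) by (simp add: field_simps)
  qed
  show ?thesis using 1 2 by simp
qed

lemma caseB_alg:
  fixes a1 b1 aj bj al be xj yj x1 y1 c3 c4 c5 :: real
  assumes nz: "\<not>(a1=0 \<and> b1=0)" and ab: "aj = al*a1" "bj = al*b1" and al: "al \<noteq> 0"
    and e: "2*aj*xj = al*(2*a1*x1) + be*c3" "2*bj*yj = al*(2*b1*y1) + be*c4"
      "aj*yj + bj*xj = al*(a1*y1 + b1*x1) + be*c5"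
  shows "\<exists>l. xj = x1 + l*(if a1 \<noteq> 0 then c3/(2*a1) else c5/b1) \<and> yj = y1 + l*(if b1 \<noteq> 0 then c4/(2*b1) else c5/a1)"
proof -
  let ?l = "be/al"
  have "2*a1*(xj - x1) = ?l*c3" using e(1) ab al by (simp add: field_simps)
  moreover have "2*b1*(yj - y1) = ?l*c4" using e(2) ab al by (simp add: field_simps)
  moreover have "a1*(yj - y1) + b1*(xj - x1) = ?l*c5" using e(3) ab al by (simp add: field_simps)
  ultimately have "xj - x1 = ?l * (if a1 \<noteq> 0 then c3/(2*a1) else c5/b1) \<and> yj - y1 = ?l * (if b1 \<noteq> 0 then c4/(2*b1) else c5/a1)"
    using line_alg[OF nz] by blast
  thus ?thesis by (intro exI[of _ ?l]) simp
qed

lemma prop_alg: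
  fixes a b a' b' x y x' y' P3 P4 P5 R3 R4 R5 :: real
  assumes nz: "\<not>(a=0 \<and> b=0)" "\<not>(a'=0 \<and> b'=0)" and pr: "a*b' = a'*b"
    and e: "2*a*x = a*P3 + b*R3" "2*b*y = a*P4 + b*R4" "a*y + b*x = a*P5 + b*R5"
    and e': "2*a'*x' = a'*P3 + b'*R3" "2*b'*y' = a'*P4 + b'*R4" "a'*y' + b'*x' = a'*P5 + b'*R5"
  shows "x = x' \<and> y = y'"
proof (cases "a = 0")
  case True
  hence b: "b \<noteq> 0" using nz by auto
  hence a': "a' = 0" using pr True by simp
  hence b': "b' \<noteq> 0" using nz by auto
  have "x = R5" "2*y = R4" using e True b by auto
  moreover have "x' = R5" "2*y' = R4" using e' a' b' by auto
  ultimately show ?thesis by simp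
next
  case False
  have a': "a' \<noteq> 0" using pr False nz(2) by auto
  define s where "s = b/a"
  have bs: "b = s*a" using False unfolding s_def by simp
  have bs': "b' = s*a'" using False pr unfolding s_def by (simp add: field_simps)
  have "a*(2*x - P3 - s*R3) = 0" using e(1) bs by (simp add: algebra_simps)
  hence x: "2*x = P3 + s*R3" using False by simp
  have "a'*(2*x' - P3 - s*R3) = 0" using e'(1) bs' by (simp add: algebra_simps)
  hence x': "2*x' = P3 + s*R3" using a' by simp
  have "a*(y + s*x - P5 - s*R5) = 0" using e(3) bs by (simp add: algebra_simps)
  hence y: "y + s*x = P5 + s*R5" using False by simp
  have "a'*(y' + s*x' - P5 - s*R5) = 0" using e'(3) bs' by (simp add: algebra_simps)
  hence y': "y' + s*x' = P5 + s*R5" using a' by simp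
  have xx: "x = x'" using x x' by linarith
  from y y'[folded xx] have "y = y'" by linarith
  thus ?thesis using xx by simp
qed

lemma cub_alg:
  fixes a b x y P3 P4 P5 R3 R4 R5 :: real
  assumes e: "2*a*x = a*P3 + b*R3" "2*b*y = a*P4 + b*R4" "a*y + b*x = a*P5 + b*R5"
  shows "P4 * a^3 + (R4 - 2*P5) * a^2 * b + (P3 - 2*R5) * a * b^2 + R3 * b^3 = 0"
proof -
  have "a*a*(2*b*y) + b*b*(2*a*x) - 2*a*b*(a*y + b*x) = 0" by (simp add: algebra_simps)
  hence "a*a*(a*P4 + b*R4) + b*b*(a*P3 + b*R3) - 2*a*b*(a*P5 + b*R5) = 0" by (simp only: e)
  thus ?thesis by (simp add: algebra_simps power2_eq_square power3_eq_cube)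
qed

lemma vert_alg:
  fixes a b x y P3 P4 P5 R3 R4 R5 :: real
  assumes nz: "\<not>(a=0 \<and> b=0)" and c: "R3 = 0" "P3 - 2*R5 = 0"
    and e: "2*a*x = a*P3 + b*R3" "a*y + b*x = a*P5 + b*R5" "2*b*y = a*P4 + b*R4" "P4 = 0" "R4 - 2*P5 = 0"
  shows "x = R5"
proof (cases "a = 0")
  case True
  hence b: "b \<noteq> 0" using nz by auto
  have "b*y = b*P5" using e True by simp
  hence "y = P5" using b by simp
  hence "b*x = b*R5" using e(2) True by simp
  thus ?thesis using b by simp
next
  case False
  have "a*(x - R5) = 0" using e(1) c by (simp add: algebra_simps)
  thus ?thesis using False by simp
qed


lemma third:
  assumes "inj_on f {1..5::nat}"
  shows "\<exists>k\<in>{f 1, f 2, f 3}. k \<noteq> i \<and> k \<noteq> j"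
proof -
  have "f 1 \<noteq> f 2" "f 1 \<noteq> f 3" "f 2 \<noteq> f 3" using assms by (auto dest: inj_onD)
  thus ?thesis by auto
qed

context
  fixes x y :: "nat \<Rightarrow> real" and \<nu> :: real
  assumes T: "nu_transverse \<nu> (\<lambda>j. {(x j, y j)})" and nu: "\<nu> > 0"
begin

lemma L_U:
  assumes U: "subspace U" "dim U \<le> 2" and K: "K \<subseteq> {1..10}" "card K \<ge> 5"
    and zK: "\<forall>j\<in>K. \<exists>z. z \<noteq> 0 \<and> z \<in> Vplane (x j) (y j) \<and> z \<in> U"
  shows False
proof -
  have fK: "finite K" using K(1) finite_subset by blast
  obtain Z where Z: "\<forall>j\<in>K. Z j \<noteq> 0 \<and> Z j \<in> Vplane (x j) (y j) \<and> Z j \<in> U"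
    using zK by metis
  define a where "a j = Z j $ 1" for j
  define b where "b j = Z j $ 2" for j
  have Zc: "Z j $ 3 = 2*a j*x j \<and> Z j $ 4 = 2*b j*y j \<and> Z j $ 5 = a j*y j + b j*x j" if jin: "j \<in> K" for j
  proof -
    obtain c d where cd: "Z j = c *\<^sub>R nvec (x j) (y j) + d *\<^sub>R mvec (x j) (y j)"
      using Z jin unfolding Vplane_def span2 by blast
    have "c = a j" "d = b j" unfolding a_def b_def cd by (simp_all add: nvec_c mvec_c)
    thus ?thesis unfolding cd by (simp add: nvec_c mvec_c)
  qed
  have Znz: "\<not> (a j = 0 \<and> b j = 0)" if jin: "j \<in> K" for j
  proof
    assume "a j = 0 \<and> b j = 0"
    hence "Z j = 0" using Zc[OF jin] unfolding vec5_eq a_def b_def by simp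
    thus False using Z jin by blast
  qed
  obtain f where f: "inj_on f {1..5::nat}" "f ` {1..5::nat} \<subseteq> K" using pickn[OF fK K(2)] by blast
  define j1 where "j1 = f 1"
  define j2 where "j2 = f 2"
  define j3 where "j3 = f 3"
  have jK: "j1 \<in> K" "j2 \<in> K" "j3 \<in> K" using f(2) unfolding j1_def j2_def j3_def by auto
  have jd: "j1 \<noteq> j2" "j1 \<noteq> j3" "j2 \<noteq> j3" using f(1) unfolding j1_def j2_def j3_def by (auto dest: inj_onD)
  have j10: "j1 \<in> {1..10}" "j2 \<in> {1..10}" "j3 \<in> {1..10}" using jK K(1) by auto
  have K10: "j \<in> {1..10}" if jin: "j \<in> K" for j using that K(1) by auto
  have thirdK: "\<exists>k\<in>K. k \<noteq> i \<and> k \<noteq> j" for i j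
    using third[OF f(1), of i j] jK unfolding j1_def j2_def j3_def by blast
  show False
  proof (cases "\<exists>c\<in>U. c \<noteq> 0 \<and> c$1 = 0 \<and> c$2 = 0")
    case True
    then obtain c where c: "c \<in> U" "c \<noteq> 0" "c$1 = 0" "c$2 = 0" by blast
    have nsp: "Z j1 \<notin> span {c}"
    proof
      assume "Z j1 \<in> span {c}"
      then obtain t where "Z j1 = t *\<^sub>R c" by (auto simp: span_singleton)
      hence "a j1 = 0" "b j1 = 0" unfolding a_def b_def using c by auto
      thus False using Znz[OF jK(1)] by simp
    qed
    have "dim {c} = 1" using c(2) by (simp add: dim_insert)
    hence d2: "dim {Z j1, c} = 2" using nsp by (simp add: dim_insert)
    have sub: "{Z j1, c} \<subseteq> U" using Z jK c by auto
    have "span {Z j1, c} = span U" by (rule dim_eq_span[OF sub]) (use d2 U in simp)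
    hence spU: "span {Z j1, c} = U" using U(1) by (simp add: span_eq_iff)
    have online: "\<exists>l. x j = x j1 + l*(if a j1 \<noteq> 0 then c$3/(2*a j1) else c$5/b j1) \<and>
        y j = y j1 + l*(if b j1 \<noteq> 0 then c$4/(2*b j1) else c$5/a j1)" if jin: "j \<in> K" for j
    proof -
      have "Z j \<in> span {Z j1, c}" using spU Z jin by blast
      then obtain al be where ab: "Z j = al *\<^sub>R Z j1 + be *\<^sub>R c" unfolding span2 by blast
      have a1: "a j = al * a j1" "b j = al * b j1" unfolding a_def b_def ab using c by simp_all
      have al: "al \<noteq> 0" using Znz[OF jin] a1 by auto
      have "Z j $ 3 = al * Z j1 $ 3 + be * c$3" "Z j $ 4 = al * Z j1 $ 4 + be * c$4"
        "Z j $ 5 = al * Z j1 $ 5 + be * c$5" unfolding ab by simp_all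
      hence e: "2*a j*x j = al*(2*a j1*x j1) + be*c$3" "2*b j*y j = al*(2*b j1*y j1) + be*c$4"
        "a j*y j + b j*x j = al*(a j1*y j1 + b j1*x j1) + be*c$5"
        using Zc[OF jin] Zc[OF jK(1)] by simp_all
      show ?thesis by (rule caseB_alg[OF Znz[OF jK(1)] a1 al e])
    qed
    show False
    proof (rule L_line[OF T nu j10 jd, of "x j1" _ "y j1"])
      fix i assume "i \<in> {j1, j2, j3}"
      hence "i \<in> K" using jK by blast
      thus "\<exists>l. x i = x j1 + l * (if a j1 \<noteq> 0 then c$3/(2*a j1) else c$5/b j1) \<and>
        y i = y j1 + l*(if b j1 \<noteq> 0 then c$4/(2*b j1) else c$5/a j1)" by (rule online)
    qed
  next
    case False
    hence z0: "c = 0" if "c \<in> U" "c$1 = 0" "c$2 = 0" for c using that by blast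
    define dt where "dt = a j1 * b j2 - a j2 * b j1"
    have Z1: "Z j1 \<in> U" "Z j2 \<in> U" "Z j1 \<noteq> 0" "Z j1 \<in> Vplane (x j1) (y j1)" "Z j2 \<in> Vplane (x j2) (y j2)"
      using Z jK by auto
    have dt: "dt \<noteq> 0"
    proof
      assume dt0: "dt = 0"
      have w: "b j2 *\<^sub>R Z j1 - b j1 *\<^sub>R Z j2 = 0"
        by (rule z0) (use Z1 U(1) dt0 in \<open>auto simp: subspace_diff subspace_scale a_def b_def dt_def algebra_simps\<close>)
      have w': "a j2 *\<^sub>R Z j1 - a j1 *\<^sub>R Z j2 = 0"
        by (rule z0) (use Z1 U(1) dt0 in \<open>auto simp: subspace_diff subspace_scale a_def b_def dt_def algebra_simps\<close>)
      have "\<exists>s. Z j1 = s *\<^sub>R Z j2"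
      proof (cases "b j2 = 0")
        case True
        hence a2: "a j2 \<noteq> 0" using Znz jK by blast
        have "Z j1 = (1 / a j2) *\<^sub>R (a j2 *\<^sub>R Z j1)" using a2 by simp
        also have "\<dots> = (1 / a j2) *\<^sub>R (a j1 *\<^sub>R Z j2)" using w' by simp
        finally show ?thesis by auto
      next
        case False
        have "Z j1 = (1 / b j2) *\<^sub>R (b j2 *\<^sub>R Z j1)" using False by simp
        also have "\<dots> = (1 / b j2) *\<^sub>R (b j1 *\<^sub>R Z j2)" using w by simp
        finally show ?thesis by auto
      qed
      then obtain s where "Z j1 = s *\<^sub>R Z j2" by blast
      hence "Z j1 \<in> Vplane (x j2) (y j2)" using Z1 subspaceW by (simp add: subspace_scale)
      thus False using L_inter[OF T nu j10(1,2) jd(1) Z1(3,4)] by blast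
    qed
    define P where "P = (1/dt) *\<^sub>R (b j2 *\<^sub>R Z j1 - b j1 *\<^sub>R Z j2)"
    define R where "R = (1/dt) *\<^sub>R (a j1 *\<^sub>R Z j2 - a j2 *\<^sub>R Z j1)"
    have PU: "P \<in> U" "R \<in> U" unfolding P_def R_def using Z1 U(1) by (simp_all add: subspace_diff subspace_scale)
    have "P$1 = (1/dt) * (b j2 * a j1 - b j1 * a j2)" "R$2 = (1/dt) * (a j1 * b j2 - a j2 * b j1)"
      unfolding P_def R_def a_def b_def by simp_all
    moreover have "b j2 * a j1 - b j1 * a j2 = dt" "a j1 * b j2 - a j2 * b j1 = dt" unfolding dt_def by simp_all
    ultimately have "P$1 = (1/dt) * dt" "R$2 = (1/dt) * dt" by simp_all
    moreover have "P$2 = 0" "R$1 = 0" unfolding P_def R_def dt_def a_def b_def by (simp_all add: algebra_simps)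
    ultimately have Pc: "P$1 = 1" "P$2 = 0" "R$1 = 0" "R$2 = 1" using dt by simp_all
    have rep: "Z j = a j *\<^sub>R P + b j *\<^sub>R R" if jin: "j \<in> K" for j
    proof -
      let ?D = "Z j - (a j *\<^sub>R P + b j *\<^sub>R R)"
      have "Z j \<in> U" using Z jin by blast
      hence DU: "?D \<in> U" using PU U(1) by (simp add: subspace_diff subspace_scale subspace_add)
      have D1: "?D $ 1 = 0" using Pc unfolding a_def by simp
      have D2: "?D $ 2 = 0" using Pc unfolding b_def by simp
      have "?D = 0" by (rule z0[OF DU D1 D2])
      thus ?thesis by simp
    qed
    have eq3: "2*a j*x j = a j*P$3 + b j*R$3" and eq4: "2*b j*y j = a j*P$4 + b j*R$4"
      and eq5: "a j*y j + b j*x j = a j*P$5 + b j*R$5" if jin: "j \<in> K" for j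
    proof -
      have "Z j $ 3 = (a j *\<^sub>R P + b j *\<^sub>R R) $ 3" "Z j $ 4 = (a j *\<^sub>R P + b j *\<^sub>R R) $ 4"
        "Z j $ 5 = (a j *\<^sub>R P + b j *\<^sub>R R) $ 5" using rep[OF jin] by simp_all
      thus "2*a j*x j = a j*P$3 + b j*R$3" "2*b j*y j = a j*P$4 + b j*R$4"
        "a j*y j + b j*x j = a j*P$5 + b j*R$5" using Zc[OF jin] by simp_all
    qed
    have np: "a i * b j \<noteq> a j * b i" if ijn: "i \<in> K" "j \<in> K" "i \<noteq> j" for i j
    proof
      assume pr: "a i * b j = a j * b i"
      have xy: "x i = x j \<and> y i = y j"
        by (rule prop_alg[OF Znz[OF ijn(1)] Znz[OF ijn(2)] pr eq3[OF ijn(1)] eq4[OF ijn(1)] eq5[OF ijn(1)]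
             eq3[OF ijn(2)] eq4[OF ijn(2)] eq5[OF ijn(2)]])
      obtain k where k: "k \<in> K" "k \<noteq> i" "k \<noteq> j" using thirdK by blast
      show False
        by (rule L_eq[OF T nu K10[OF ijn(1)] K10[OF ijn(2)] K10[OF k(1)] ijn(3)]) (use k xy in auto)
    qed
    have cub: "P$4 * a j^3 + (R$4 - 2*P$5) * a j^2 * b j + (P$3 - 2*R$5) * a j * b j^2 + R$3 * b j^3 = 0"
      if jin: "j \<in> K" for j
      by (rule cub_alg[OF eq3[OF jin] eq4[OF jin] eq5[OF jin]])
    have cz: "P$4 = 0 \<and> R$4 - 2*P$5 = 0 \<and> P$3 - 2*R$5 = 0 \<and> R$3 = 0"
      by (rule cubic_hom[OF fK K(2) Znz np cub])
    have cc: "R$3 = 0" "P$3 - 2*R$5 = 0" "P$4 = 0" "R$4 - 2*P$5 = 0" using cz by auto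
    have vert: "x j = R$5" if jin: "j \<in> K" for j
      by (rule vert_alg[OF Znz[OF jin] cc(1) cc(2) eq3[OF jin] eq5[OF jin] eq4[OF jin] cc(3) cc(4)])
    show False
    proof (rule L_line[OF T nu j10 jd, of "R$5" 0 0 1])
      fix i assume "i \<in> {j1, j2, j3}"
      hence "i \<in> K" using jK by blast
      thus "\<exists>l. x i = R $ 5 + l * 0 \<and> y i = 0 + l * 1" using vert by simp
    qed
  qed
qed

end


lemma sum_lb:
  fixes f :: "nat \<Rightarrow> real"
  assumes A: "finite A" and nn: "\<And>j. j \<in> A \<Longrightarrow> 0 \<le> f j" and c: "0 \<le> c"
    and J: "card {j\<in>A. f j < c} \<le> m"
  shows "c * real (card A - m) \<le> sum f A"
proof -
  let ?J = "{j\<in>A. f j < c}"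
  have "sum f (A - ?J) \<le> sum f A" by (rule sum_mono2) (use A nn in auto)
  moreover have "sum (\<lambda>_. c) (A - ?J) \<le> sum f (A - ?J)" by (rule sum_mono) auto
  moreover have "sum (\<lambda>_. c) (A - ?J) = c * real (card (A - ?J))" by simp
  moreover have "card (A - ?J) = card A - card ?J" by (rule card_Diff_subset) (use A in auto)
  moreover have "card A - m \<le> card A - card ?J" using J by arith
  ultimately have "c * real (card A - m) \<le> c * real (card (A - ?J))" using c by (simp add: mult_left_mono)
  moreover have "real (card (A - ?J)) * c = c * real (card (A - ?J))" by simp
  ultimately show ?thesis using \<open>sum f (A - ?J) \<le> sum f A\<close> \<open>sum (\<lambda>_. c) (A - ?J) \<le> sum f (A - ?J)\<close>
    \<open>sum (\<lambda>_. c) (A - ?J) = c * real (card (A - ?J))\<close> by linarith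
qed

theorem proposition4p2:
  fixes x y :: "nat \<Rightarrow> real" and \<nu> :: real and V :: "(real^5) set"
  assumes "\<forall>j\<in>{1..10}. x j \<in> {0..1} \<and> y j \<in> {0..1}"
    and "\<nu> > 0"
    and "nu_transverse \<nu> (\<lambda>j. {(x j, y j)})"
    and "subspace V"
  shows "real (dim V) \<le> (1/4) * (\<Sum>j=1..10. real (dim (orth_proj (Vplane (x j) (y j)) ` V)))"
proof -
  note T = assms(3) and nu = assms(2) and sV = assms(4)
  define f where "f j = real (dim (orth_proj (Vplane (x j) (y j)) ` V))" for j
  have nn: "\<And>j. j \<in> {1..10} \<Longrightarrow> 0 \<le> f j" unfolding f_def by simp
  have fin: "finite {1..10::nat}" by simp
  have c10: "card {1..10::nat} = 10" by simp
  define U where "U = {z. \<forall>v\<in>V. orthogonal v z}"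
  have sU: "subspace U" unfolding U_def by (rule subspace_orthogonal_to_vectors)
  have "dim {z \<in> UNIV. \<forall>v\<in>V. orthogonal v z} + dim V = dim (UNIV :: (real^5) set)"
    by (rule dim_subspace_orthogonal_to_vectors[OF sV]) auto
  hence dUV: "dim U + dim V = 5" unfolding U_def by simp
  have inU: "z \<in> U" if "\<forall>v\<in>V. z \<bullet> v = 0" for z
    using that unfolding U_def orthogonal_def by (simp add: inner_commute)
  have zJ: "\<exists>z. z \<noteq> 0 \<and> z \<in> Vplane (x j) (y j) \<and> z \<in> U" if "f j < 2" for j
  proof -
    have "dim (orth_proj (Vplane (x j) (y j)) ` V) < 2" using that unfolding f_def by simp
    then obtain z where "z \<noteq> 0" "z \<in> Vplane (x j) (y j)" "\<forall>v\<in>V. z \<bullet> v = 0" using L1 by blast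
    thus ?thesis using inU by blast
  qed
  have main: "4 * real (dim V) \<le> sum f {1..10}"
  proof -
    consider "dim V = 0" | "dim V = 1 \<or> dim V = 2" | "dim V = 3" | "dim V = 4" | "dim V = 5"
      using dUV by linarith
    then show ?thesis
    proof cases
      case 1
      have "0 \<le> sum f {1..10}" using sum_nonneg[of "{1..10}" f] nn by simp
      thus ?thesis using 1 by (simp del: dim_eq_0)
    next
      case 2
      have "dim V \<noteq> 0" using 2 by linarith
      hence "\<not> V \<subseteq> {0}" by simp
      then obtain v where v: "v \<in> V" "v \<noteq> 0" by blast
      have "card {j\<in>{1..10}. f j < 1} \<le> 2"
      proof (rule ccontr)
        assume "\<not> ?thesis"
        hence "3 \<le> card {j\<in>{1..10}. f j < 1}" by simp
        moreover have "finite {j\<in>{1..10::nat}. f j < 1}" by simp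
        ultimately obtain g where g: "inj_on g {1..3::nat}" "g ` {1..3} \<subseteq> {j\<in>{1..10}. f j < 1}"
          using pickn by blast
        have g10: "g i \<in> {1..10}" "f (g i) < 1" if "i \<in> {1..3}" for i
        proof -
          have "g i \<in> {j\<in>{1..10}. f j < 1}" using g(2) that by blast
          thus "g i \<in> {1..10}" "f (g i) < 1" by auto
        qed
        have gd: "g 1 \<noteq> g 2" "g 1 \<noteq> g 3" "g 2 \<noteq> g 3" using g(1) by (auto dest: inj_onD)
        have pe: "nvec (x a) (y a) \<bullet> v = 0 \<and> mvec (x a) (y a) \<bullet> v = 0" if "a \<in> {g 1, g 2, g 3}" for a
        proof -
          have "f a < 1" using that g10[of 1] g10[of 2] g10[of 3] by auto
          hence "dim (orth_proj (Vplane (x a) (y a)) ` V) = 0" unfolding f_def by simp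
          thus ?thesis using L0 v(1) by blast
        qed
        show False by (rule L_perp[OF T nu g10(1)[of 1] g10(1)[of 2] g10(1)[of 3] gd v(2) pe]) auto
      qed
      hence "1 * real (10 - 2) \<le> sum f {1..10}" using sum_lb[OF fin nn, where c=1 and m=2] c10 by simp
      thus ?thesis using 2 by auto
    next
      case 3
      have "card {j\<in>{1..10}. f j < 2} \<le> 4"
      proof (rule ccontr)
        assume "\<not> ?thesis"
        hence c5: "5 \<le> card {j\<in>{1..10}. f j < 2}" by simp
        have zz: "\<forall>j\<in>{j\<in>{1..10}. f j < 2}. \<exists>z. z \<noteq> 0 \<and> z \<in> Vplane (x j) (y j) \<and> z \<in> U"
          using zJ by blast
        have d2: "dim U \<le> 2" using dUV 3 by simp
        have sub: "{j\<in>{1..10::nat}. f j < 2} \<subseteq> {1..10}" by blast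
        show False by (rule L_U[OF T nu sU d2 sub c5 zz])
      qed
      hence "2 * real (10 - 4) \<le> sum f {1..10}" using sum_lb[OF fin nn, where c=2 and m=4] c10 by simp
      thus ?thesis using 3 by auto
    next
      case 4
      have "card {j\<in>{1..10}. f j < 2} \<le> 1"
      proof (rule ccontr)
        assume "\<not> ?thesis"
        hence "2 \<le> card {j\<in>{1..10}. f j < 2}" by simp
        moreover have "finite {j\<in>{1..10::nat}. f j < 2}" by simp
        ultimately obtain g where g: "inj_on g {1..2::nat}" "g ` {1..2} \<subseteq> {j\<in>{1..10}. f j < 2}"
          using pickn by blast
        have g10: "g i \<in> {1..10}" "f (g i) < 2" if "i \<in> {1..2}" for i
        proof -
          have "g i \<in> {j\<in>{1..10}. f j < 2}" using g(2) that by blast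
          thus "g i \<in> {1..10}" "f (g i) < 2" by auto
        qed
        have gd: "g 1 \<noteq> g 2" using g(1) by (auto dest: inj_onD)
        obtain z1 where z1: "z1 \<noteq> 0" "z1 \<in> Vplane (x (g 1)) (y (g 1))" "z1 \<in> U" using zJ g10(2)[of 1] by auto
        obtain z2 where z2: "z2 \<noteq> 0" "z2 \<in> Vplane (x (g 2)) (y (g 2))" "z2 \<in> U" using zJ g10(2)[of 2] by auto
        have "dim {z1} = 1" using z1(1) by (simp add: dim_insert)
        moreover have "dim U = 1" using dUV 4 by simp
        ultimately have "span {z1} = span U" using z1(3) by (intro dim_eq_span) auto
        hence "z2 \<in> span {z1}" using z2(3) span_base by blast
        then obtain t where "z2 = t *\<^sub>R z1" by (auto simp: span_singleton)
        hence "z2 \<in> Vplane (x (g 1)) (y (g 1))" using z1(2) subspaceW by (simp add: subspace_scale)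
        thus False using L_inter[OF T nu g10(1)[of 1] g10(1)[of 2] gd z2(1)] z2(2) by auto
      qed
      hence "2 * real (10 - 1) \<le> sum f {1..10}" using sum_lb[OF fin nn, where c=2 and m=1] c10 by simp
      thus ?thesis using 4 by auto
    next
      case 5
      have "card {j\<in>{1..10}. f j < 2} \<le> 0"
      proof (rule ccontr)
        assume "\<not> ?thesis"
        hence "{j\<in>{1..10::nat}. f j < 2} \<noteq> {}" by (metis card.empty le_refl)
        then obtain j where "j \<in> {1..10}" "f j < 2" by blast
        then obtain z where z: "z \<noteq> 0" "z \<in> U" using zJ by blast
        have "dim U = 0" using dUV 5 by simp
        hence "U \<subseteq> {0}" by simp
        thus False using z by blast
      qed
      hence "2 * real (10 - 0) \<le> sum f {1..10}" using sum_lb[OF fin nn, where c=2 and m=0] c10 by simp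
      thus ?thesis using 5 by auto
    qed
  qed
  thus ?thesis unfolding f_def by simp
qed

end
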